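(* Assume that $\{A_0,A_1\}$ is a partition of $\mathbb R$ which is a $2$-S-covering. Then at least one of the sets $A_0,A_1$ is a $2$-covering.
   Context: A family $\mathcal A$ of pairwise disjoint subsets of $\mathbb R$ is a $\kappa$-S-covering if $|\mathcal A|=\kappa$ and for every $F\subseteq\mathbb R$ with $|F|=\kappa$ there is $t\in\mathbb R$ such that $F+t\subseteq\bigcup\mathcal A$ and $|(F+t)\cap A|=1$ for every $A\in\mathcal A$. A set $A\subseteq\mathbb R$ is a $2$-covering if for every $B\subseteq\mathbb R$ with $|B|=2$ there is $x\in\mathbb R$ with $B+x\subseteq A$. *)

theory Defs
  imports "HOL-Analysis.Analysis"
begin

definition translate :: "real set \<Rightarrow> real \<Rightarrow> real set" where
  "translate F t = (\<lambda>x. x + t) ` F"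

definition S_covering :: "nat \<Rightarrow> real set set \<Rightarrow> bool" where
  "S_covering k \<A> \<longleftrightarrow>
     (\<forall>A\<in>\<A>. \<forall>B\<in>\<A>. A \<noteq> B \<longrightarrow> A \<inter> B = {}) \<and>
     finite \<A> \<and> card \<A> = k \<and>
     (\<forall>F. finite F \<and> card F = k \<longrightarrow>
        (\<exists>t. translate F t \<subseteq> \<Union>\<A> \<and>
             (\<forall>A\<in>\<A>. card (translate F t \<inter> A) = 1)))"

definition two_covering :: "real set \<Rightarrow> bool" where
  "two_covering A \<longleftrightarrow>
     (\<forall>B. finite B \<and> card B = 2 \<longrightarrow> (\<exists>x. translate B x \<subseteq> A))"

end

theory Submission
  imports Defs
begin

lemma notcov:
  assumes "\<not> two_covering A"
  shows "\<exists>d>0. \<forall>y. \<not>(y \<in> A \<and> y+d \<in> A)"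
proof -
  from assms obtain B where B: "finite B" "card B = 2" "\<forall>x. \<not> translate B x \<subseteq> A"
    unfolding two_covering_def by blast
  then obtain a b where ab: "B = {a,b}" "a \<noteq> b" by (meson card_2_iff)
  show ?thesis
  proof (cases "a < b")
    case True
    show ?thesis
    proof (intro exI[of _ "b-a"] conjI allI)
      show "b - a > 0" using True by simp
      fix y
      have "translate B (y-a) = {y, y+(b-a)}" unfolding ab translate_def by auto
      then show "\<not>(y \<in> A \<and> y+(b-a) \<in> A)" using B(3)[rule_format, of "y-a"] by auto
    qed
  next
    case False
    show ?thesis
    proof (intro exI[of _ "a-b"] conjI allI)
      show "a - b > 0" using False ab(2) by simp
      fix y
      have "translate B (y-b) = {y+(a-b), y}" unfolding ab translate_def by auto
      then show "\<not>(y \<in> A \<and> y+(a-b) \<in> A)" using B(3)[rule_format, of "y-b"] by auto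
    qed
  qed
qed

theorem mainTheorem9:
  fixes A0 A1 :: "real set"
  assumes "A0 \<union> A1 = UNIV" and "A0 \<inter> A1 = {}"
    and "S_covering 2 {A0, A1}"
  shows "two_covering A0 \<or> two_covering A1"
proof (rule ccontr)
  assume "\<not> (two_covering A0 \<or> two_covering A1)"
  then obtain d0 d1 where d0: "d0 > 0" "\<forall>y. \<not>(y \<in> A0 \<and> y+d0 \<in> A0)"
    and d1: "d1 > 0" "\<forall>y. \<not>(y \<in> A1 \<and> y+d1 \<in> A1)"
    using notcov by meson
  define D where "D = d0 + d1"
  have per: "y \<in> A0 \<longleftrightarrow> y + D \<in> A0" for y
  proof
    assume "y \<in> A0"
    then have "y + d0 \<in> A1" using d0 assms(1) by blast
    then have "y + d0 + d1 \<notin> A1" using d1 by blast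
    then show "y + D \<in> A0" using assms(1) unfolding D_def by (auto simp: add.assoc)
  next
    assume h: "y + D \<in> A0"
    show "y \<in> A0"
    proof (rule ccontr)
      assume "y \<notin> A0"
      then have "y \<in> A1" using assms(1) by blast
      then have "y + d1 \<in> A0" using d1 assms(1) by blast
      then have "y + d1 + d0 \<in> A1" using d0 assms(1) by blast
      then show False using h assms(2) unfolding D_def by (auto simp: algebra_simps)
    qed
  qed
  have "D > 0" using d0 d1 D_def by simp
  then have "finite {0, D}" "card {0, D} = 2" by auto
  then obtain t where t0: "\<forall>A\<in>{A0,A1}. card (translate {0,D} t \<inter> A) = 1"
  proof -
    have "\<forall>F. finite F \<and> card F = 2 \<longrightarrow>
        (\<exists>t. translate F t \<subseteq> \<Union>{A0,A1} \<and> (\<forall>A\<in>{A0,A1}. card (translate F t \<inter> A) = 1))"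
      using assms(3) unfolding S_covering_def by (elim conjE)
    then have "\<exists>t. translate {0,D} t \<subseteq> \<Union>{A0,A1} \<and> (\<forall>A\<in>{A0,A1}. card (translate {0,D} t \<inter> A) = 1)"
      using \<open>finite {0, D}\<close> \<open>card {0, D} = 2\<close> by (elim allE impE) (rule conjI)
    then show ?thesis using that by (elim exE conjE)
  qed
  then have t: "card (translate {0,D} t \<inter> A0) = 1" by simp
  have tr: "translate {0,D} t = {t, t+D}" unfolding translate_def by auto
  show False
  proof (cases "t \<in> A0")
    case True
    then have "translate {0,D} t \<inter> A0 = {t, t+D}" using tr per[of t] by (auto simp: add.commute)
    then show False using t \<open>D > 0\<close> by simp
  next
    case False
    then have "translate {0,D} t \<inter> A0 = {}" using tr per[of t] by (auto simp: add.commute)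
    then show False using t by simp
  qed
qed

end
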